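(* Let $q\ge 7$ be a prime power, $m=\lceil (q+1)/2\rceil$, and suppose $\mathcal{H}=\{h_1,\dots,h_m\}\subseteq\mathbb{F}_q^3$ is a short covering of $\mathbb{F}_q^3$. Then: (1) some vector of $\mathcal{H}$ has weight $3$; (2) for each $j\in\{1,2,3\}$ there is $h_k\in\mathcal{H}$ with $\pi_j(h_k)=0$; (3) $\mathcal{H}$ is $\mathbb{F}_q$-equivalent to a set of one of the following two forms: $\mathcal{H}_1=\{(1,1,1),(0,*,* ),( *,0,* ),( *,*,0),h_5,\dots,h_m\}$ or $\mathcal{H}_2=\{(1,1,1),(0,*,* ),( *,0,0),h_4,\dots,h_m\}$, where each $*$ denotes an arbitrary element of $\mathbb{F}_q$ and the $h_i$ denote arbitrary vectors of $\mathbb{F}_q^3$.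
   Context: $\mathbb{F}_q$ is the finite field with $q$ elements. Hamming distance $d(u,v)=|\{i:u_i\ne v_i\}|$; $B(u)=\{v:d(u,v)\le1\}$; $E(u)=\bigcup_{\lambda\in\mathbb{F}_q}B(\lambda u)$. $\mathcal{H}\subseteq\mathbb{F}_q^3$ is a short covering of $\mathbb{F}_q^3$ if $\bigcup_{h\in\mathcal{H}}E(h)=\mathbb{F}_q^3$. The weight of $u$ is $\omega(u)=|\{i:u_i\ne0\}|$, and $\pi_j(u_1,u_2,u_3)=u_j$. Two subsets of $\mathbb{F}_q^3$ are $\mathbb{F}_q$-equivalent if one is mapped onto the other by a map of the form $(u_1,u_2,u_3)\mapsto(a_1u_{\varphi(1)},a_2u_{\varphi(2)},a_3u_{\varphi(3)})$ with $\varphi$ a permutation of $\{1,2,3\}$ and $a_1,a_2,a_3\in\mathbb{F}_q^*$ (the action of the wreath product of $\mathbb{F}_q^*$ by $S_3$). *)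

theory Defs
  imports Complex_Main
begin

type_synonym 'a vec3 = "'a \<times> 'a \<times> 'a"

definition coord :: "'a vec3 \<Rightarrow> nat \<Rightarrow> 'a" where
  "coord u j = (if j = 1 then fst u else if j = 2 then fst (snd u) else snd (snd u))"

definition hdist :: "'a vec3 \<Rightarrow> 'a vec3 \<Rightarrow> nat" where
  "hdist u v = card {i \<in> {1,2,3::nat}. coord u i \<noteq> coord v i}"

definition ball1 :: "'a vec3 \<Rightarrow> 'a vec3 set" where
  "ball1 u = {v. hdist u v \<le> 1}"

definition scal :: "'a::times \<Rightarrow> 'a vec3 \<Rightarrow> 'a vec3" where
  "scal c u = (c * fst u, c * fst (snd u), c * snd (snd u))"

definition Ext :: "'a::field vec3 \<Rightarrow> 'a vec3 set" where
  "Ext u = (\<Union>c. ball1 (scal c u))"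

definition short_covering :: "'a::field vec3 set \<Rightarrow> bool" where
  "short_covering H \<longleftrightarrow> (\<Union>h\<in>H. Ext h) = UNIV"

definition weight :: "'a::zero vec3 \<Rightarrow> nat" where
  "weight u = card {i \<in> {1,2,3::nat}. coord u i \<noteq> 0}"

definition mono_map :: "(nat \<Rightarrow> nat) \<Rightarrow> 'a \<Rightarrow> 'a \<Rightarrow> 'a \<Rightarrow> 'a::times vec3 \<Rightarrow> 'a vec3" where
  "mono_map \<phi> a1 a2 a3 u = (a1 * coord u (\<phi> 1), a2 * coord u (\<phi> 2), a3 * coord u (\<phi> 3))"

definition Fq_equivalent :: "'a::field vec3 set \<Rightarrow> 'a vec3 set \<Rightarrow> bool" where
  "Fq_equivalent A B \<longleftrightarrow> (\<exists>\<phi> a1 a2 a3. bij_betw \<phi> {1,2,3::nat} {1,2,3} \<and>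
      a1 \<noteq> 0 \<and> a2 \<noteq> 0 \<and> a3 \<noteq> 0 \<and> mono_map \<phi> a1 a2 a3 ` A = B)"

definition form_H1 :: "'a::field vec3 set \<Rightarrow> bool" where
  "form_H1 S \<longleftrightarrow> (1,1,1) \<in> S \<and> (\<exists>u\<in>S. \<exists>v\<in>S. \<exists>w\<in>S.
      coord u 1 = 0 \<and> coord v 2 = 0 \<and> coord w 3 = 0 \<and>
      distinct [(1,1,1), u, v, w])"

definition form_H2 :: "'a::field vec3 set \<Rightarrow> bool" where
  "form_H2 S \<longleftrightarrow> (1,1,1) \<in> S \<and> (\<exists>u\<in>S. \<exists>v\<in>S.
      coord u 1 = 0 \<and> coord v 2 = 0 \<and> coord v 3 = 0 \<and>
      distinct [(1,1,1), u, v])"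

end

theory Submission
  imports Defs
begin

lemma setQ: "{i \<in> {1,2,3::nat}. Q i} = (if Q 1 then {1} else {}) \<union> (if Q 2 then {2} else {}) \<union> (if Q 3 then {3} else {})"
  by auto

lemma coord_simps[simp]: "coord u (Suc 0) = fst u" "coord u 1 = fst u" "coord u 2 = fst (snd u)" "coord u 3 = snd (snd u)"
  by (simp_all add: coord_def)

lemma ball1_iff: "v \<in> ball1 u \<longleftrightarrow> (fst u = fst v \<and> fst (snd u) = fst (snd v)) \<or> (fst u = fst v \<and> snd (snd u) = snd (snd v)) \<or> (fst (snd u) = fst (snd v) \<and> snd (snd u) = snd (snd v))"
  unfolding ball1_def hdist_def setQ by (auto simp: coord_def split: if_splits)

lemma Ext_iff: "v \<in> Ext u \<longleftrightarrow> (\<exists>c. v \<in> ball1 (scal c u))"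
  by (simp add: Ext_def)

lemma weight3: "fst h \<noteq> 0 \<Longrightarrow> fst (snd h) \<noteq> 0 \<Longrightarrow> snd (snd h) \<noteq> 0 \<Longrightarrow> weight h = 3"
  unfolding weight_def setQ by (simp add: coord_def)

lemma count_cover:
  assumes "finite C" "finite H" "C \<subseteq> (\<Union>h\<in>H. f h ` A)" "finite A"
  shows "card C \<le> card H * card A"
proof -
  have "card C \<le> card (\<Union>h\<in>H. f h ` A)" by (rule card_mono) (use assms in auto)
  also have "\<dots> \<le> (\<Sum>h\<in>H. card (f h ` A))" by (rule card_UN_le[OF assms(2)])
  also have "\<dots> \<le> (\<Sum>h\<in>H. card A)" by (rule sum_mono) (rule card_image_le[OF assms(4)])
  also have "\<dots> = card H * card A" by simp
  finally show ?thesis .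
qed

lemma card_nz: "card (UNIV - {0::'a::{zero,finite}}) = card (UNIV :: 'a set) - 1"
  by (simp add: card_Diff_singleton)

lemma class1:
  fixes H :: "('a::{field,finite}) vec3 set"
  assumes cov: "short_covering H"
  shows "(\<exists>h\<in>H. fst h = 0 \<and> h \<noteq> (0,0,0)) \<or> card (UNIV :: 'a set) - 1 \<le> card H"
proof (cases "\<exists>h\<in>H. fst h = 0 \<and> h \<noteq> (0,0,0)")
  case True thus ?thesis by blast
next
  case False note no = False
  define nz where "nz = UNIV - {0::'a}"
  have sub: "{0::'a} \<times> (nz \<times> nz) \<subseteq> (\<Union>h\<in>H. (\<lambda>c. (0, c * fst (snd h), c * snd (snd h))) ` nz)"
  proof
    fix v assume v: "v \<in> {0::'a} \<times> (nz \<times> nz)"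
    then obtain y z where vv: "v = (0, y, z)" "y \<noteq> 0" "z \<noteq> 0" by (auto simp: nz_def)
    from cov have "v \<in> (\<Union>h\<in>H. Ext h)" by (simp add: short_covering_def)
    then obtain h c where h: "h \<in> H" "v \<in> ball1 (scal c h)" by (auto simp: Ext_iff)
    obtain a b d where hh: "h = (a, b, d)" by (cases h)
    show "v \<in> (\<Union>h\<in>H. (\<lambda>c. (0, c * fst (snd h), c * snd (snd h))) ` nz)"
    proof (cases "a = 0")
      case True
      with no h hh have "h = (0,0,0)" by auto
      with h vv show ?thesis by (auto simp: ball1_iff scal_def)
    next
      case False
      show ?thesis
      proof (cases "c = 0")
        case True with h vv show ?thesis by (auto simp: ball1_iff scal_def)
      next
        case c: False
        with False h vv hh have "y = c * b" "z = c * d" by (auto simp: ball1_iff scal_def)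
        with hh vv have "v = (\<lambda>c. (0, c * fst (snd h), c * snd (snd h))) c" by simp
        moreover have "c \<in> nz" using c by (simp add: nz_def)
        ultimately show ?thesis using h(1) by blast
      qed
    qed
  qed
  have "card ({0::'a} \<times> (nz \<times> nz)) \<le> card H * card nz"
    by (rule count_cover[OF _ _ sub]) auto
  hence "card nz * card nz \<le> card H * card nz" by (simp add: card_cartesian_product)
  moreover have "card nz > 0" unfolding card_gt_0_iff nz_def
    by (metis Diff_iff finite insert_iff one_neq_zero UNIV_I empty_iff)
  ultimately have "card nz \<le> card H" by simp
  thus ?thesis by (simp add: nz_def card_nz)
qed

lemma class2:
  fixes H :: "('a::{field,finite}) vec3 set"
  assumes cov: "short_covering H"
  shows "(\<exists>h\<in>H. fst (snd h) = 0 \<and> h \<noteq> (0,0,0)) \<or> card (UNIV :: 'a set) - 1 \<le> card H"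
proof (cases "\<exists>h\<in>H. fst (snd h) = 0 \<and> h \<noteq> (0,0,0)")
  case True thus ?thesis by blast
next
  case False note no = False
  define nz where "nz = UNIV - {0::'a}"
  have sub: "nz \<times> ({0::'a} \<times> nz) \<subseteq> (\<Union>h\<in>H. (\<lambda>c. (c * fst h, 0, c * snd (snd h))) ` nz)"
  proof
    fix v assume v: "v \<in> nz \<times> ({0::'a} \<times> nz)"
    then obtain y z where vv: "v = (y, 0, z)" "y \<noteq> 0" "z \<noteq> 0" by (auto simp: nz_def)
    from cov have "v \<in> (\<Union>h\<in>H. Ext h)" by (simp add: short_covering_def)
    then obtain h c where h: "h \<in> H" "v \<in> ball1 (scal c h)" by (auto simp: Ext_iff)
    obtain a b d where hh: "h = (a, b, d)" by (cases h)
    show "v \<in> (\<Union>h\<in>H. (\<lambda>c. (c * fst h, 0, c * snd (snd h))) ` nz)"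
    proof (cases "b = 0")
      case True
      with no h hh have "h = (0,0,0)" by auto
      with h vv show ?thesis by (auto simp: ball1_iff scal_def)
    next
      case False
      show ?thesis
      proof (cases "c = 0")
        case True with h vv show ?thesis by (auto simp: ball1_iff scal_def)
      next
        case c: False
        with False h vv hh have "y = c * a" "z = c * d" by (auto simp: ball1_iff scal_def)
        with hh vv have "v = (\<lambda>c. (c * fst h, 0, c * snd (snd h))) c" by simp
        moreover have "c \<in> nz" using c by (simp add: nz_def)
        ultimately show ?thesis using h(1) by blast
      qed
    qed
  qed
  have "card (nz \<times> ({0::'a} \<times> nz)) \<le> card H * card nz"
    by (rule count_cover[OF _ _ sub]) auto
  hence "card nz * card nz \<le> card H * card nz" by (simp add: card_cartesian_product)
  moreover have "card nz > 0" unfolding card_gt_0_iff nz_def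
    by (metis Diff_iff finite insert_iff one_neq_zero UNIV_I empty_iff)
  ultimately have "card nz \<le> card H" by simp
  thus ?thesis by (simp add: nz_def card_nz)
qed

lemma class3:
  fixes H :: "('a::{field,finite}) vec3 set"
  assumes cov: "short_covering H"
  shows "(\<exists>h\<in>H. snd (snd h) = 0 \<and> h \<noteq> (0,0,0)) \<or> card (UNIV :: 'a set) - 1 \<le> card H"
proof (cases "\<exists>h\<in>H. snd (snd h) = 0 \<and> h \<noteq> (0,0,0)")
  case True thus ?thesis by blast
next
  case False note no = False
  define nz where "nz = UNIV - {0::'a}"
  have sub: "nz \<times> (nz \<times> {0::'a}) \<subseteq> (\<Union>h\<in>H. (\<lambda>c. (c * fst h, c * fst (snd h), 0)) ` nz)"
  proof
    fix v assume v: "v \<in> nz \<times> (nz \<times> {0::'a})"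
    then obtain y z where vv: "v = (y, z, 0)" "y \<noteq> 0" "z \<noteq> 0" by (auto simp: nz_def)
    from cov have "v \<in> (\<Union>h\<in>H. Ext h)" by (simp add: short_covering_def)
    then obtain h c where h: "h \<in> H" "v \<in> ball1 (scal c h)" by (auto simp: Ext_iff)
    obtain a b d where hh: "h = (a, b, d)" by (cases h)
    show "v \<in> (\<Union>h\<in>H. (\<lambda>c. (c * fst h, c * fst (snd h), 0)) ` nz)"
    proof (cases "d = 0")
      case True
      with no h hh have "h = (0,0,0)" by auto
      with h vv show ?thesis by (auto simp: ball1_iff scal_def)
    next
      case False
      show ?thesis
      proof (cases "c = 0")
        case True with h vv show ?thesis by (auto simp: ball1_iff scal_def)
      next
        case c: False
        with False h vv hh have "y = c * a" "z = c * b" by (auto simp: ball1_iff scal_def)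
        with hh vv have "v = (\<lambda>c. (c * fst h, c * fst (snd h), 0)) c" by simp
        moreover have "c \<in> nz" using c by (simp add: nz_def)
        ultimately show ?thesis using h(1) by blast
      qed
    qed
  qed
  have "card (nz \<times> (nz \<times> {0::'a})) \<le> card H * card nz"
    by (rule count_cover[OF _ _ sub]) auto
  hence "card nz * card nz \<le> card H * card nz" by (simp add: card_cartesian_product)
  moreover have "card nz > 0" unfolding card_gt_0_iff nz_def
    by (metis Diff_iff finite insert_iff one_neq_zero UNIV_I empty_iff)
  ultimately have "card nz \<le> card H" by simp
  thus ?thesis by (simp add: nz_def card_nz)
qed

lemma w3:
  fixes H :: "('a::{field,finite}) vec3 set"
  assumes cov: "short_covering H"
  shows "(\<exists>h\<in>H. fst h \<noteq> 0 \<and> fst (snd h) \<noteq> 0 \<and> snd (snd h) \<noteq> 0) \<or> card (UNIV :: 'a set) - 1 \<le> card H"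
proof (cases "\<exists>h\<in>H. fst h \<noteq> 0 \<and> fst (snd h) \<noteq> 0 \<and> snd (snd h) \<noteq> 0")
  case True thus ?thesis by blast
next
  case False note no = False
  define nz where "nz = UNIV - {0::'a}"
  define F where "F h p = (if fst h = 0 then (fst p, snd p * fst (snd h), snd p * snd (snd h))
     else if fst (snd h) = 0 then (snd p * fst h, fst p, snd p * snd (snd h))
     else (snd p * fst h, snd p * fst (snd h), fst p))" for h :: "'a vec3" and p :: "'a \<times> 'a"
  have sub: "nz \<times> (nz \<times> nz) \<subseteq> (\<Union>h\<in>H. F h ` (nz \<times> nz))"
  proof
    fix v assume v: "v \<in> nz \<times> (nz \<times> nz)"
    then obtain x y z where vv: "v = (x, y, z)" "x \<noteq> 0" "y \<noteq> 0" "z \<noteq> 0" by (auto simp: nz_def)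
    from cov have "v \<in> (\<Union>h\<in>H. Ext h)" by (simp add: short_covering_def)
    then obtain h c where h: "h \<in> H" "v \<in> ball1 (scal c h)" by (auto simp: Ext_iff)
    obtain a b d where hh: "h = (a, b, d)" by (cases h)
    have c: "c \<noteq> 0"
    proof
      assume "c = 0" with h vv show False by (auto simp: ball1_iff scal_def)
    qed
    have cn: "c \<in> nz" using c by (simp add: nz_def)
    from no h hh have z3: "a = 0 \<or> b = 0 \<or> d = 0" by auto
    show "v \<in> (\<Union>h\<in>H. F h ` (nz \<times> nz))"
    proof (cases "a = 0")
      case True
      with h vv hh have "y = c * b" "z = c * d" by (auto simp: ball1_iff scal_def)
      with True hh vv have "v = F h (x, c)" by (simp add: F_def)
      moreover have "(x, c) \<in> nz \<times> nz" using cn vv by (simp add: nz_def)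
      ultimately show ?thesis using h(1) by blast
    next
      case a: False
      show ?thesis
      proof (cases "b = 0")
        case True
        with a h vv hh have "x = c * a" "z = c * d" by (auto simp: ball1_iff scal_def)
        with True a hh vv have "v = F h (y, c)" by (simp add: F_def)
        moreover have "(y, c) \<in> nz \<times> nz" using cn vv by (simp add: nz_def)
        ultimately show ?thesis using h(1) by blast
      next
        case b: False
        with a z3 have d: "d = 0" by simp
        with a b h vv hh have "x = c * a" "y = c * b" by (auto simp: ball1_iff scal_def)
        with a b hh vv have "v = F h (z, c)" by (simp add: F_def)
        moreover have "(z, c) \<in> nz \<times> nz" using cn vv by (simp add: nz_def)
        ultimately show ?thesis using h(1) by blast
      qed
    qed
  qed
  have "card (nz \<times> (nz \<times> nz)) \<le> card H * card (nz \<times> nz)"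
    by (rule count_cover[OF _ _ sub]) auto
  hence "card nz * (card nz * card nz) \<le> card H * (card nz * card nz)" by (simp add: card_cartesian_product)
  moreover have "card nz > 0" unfolding card_gt_0_iff nz_def
    by (metis Diff_iff finite insert_iff one_neq_zero UNIV_I empty_iff)
  ultimately have "card nz \<le> card H" by simp
  thus ?thesis by (simp add: nz_def card_nz)
qed

lemma Mmap:
  fixes h0 :: "'a::field vec3"
  assumes bij: "bij_betw \<phi> {1,2,3::nat} {1,2,3}"
    and nz: "fst h0 \<noteq> 0" "fst (snd h0) \<noteq> 0" "snd (snd h0) \<noteq> 0"
  defines "M \<equiv> mono_map \<phi> (inverse (coord h0 (\<phi> 1))) (inverse (coord h0 (\<phi> 2))) (inverse (coord h0 (\<phi> 3)))"
  shows "Fq_equivalent H (M ` H)" "M h0 = (1,1,1)" "inj M"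
    "fst (M u) = 0 \<longleftrightarrow> coord u (\<phi> 1) = 0"
    "fst (snd (M u)) = 0 \<longleftrightarrow> coord u (\<phi> 2) = 0"
    "snd (snd (M u)) = 0 \<longleftrightarrow> coord u (\<phi> 3) = 0"
proof -
  have cz: "coord h0 j \<noteq> 0" for j using nz by (simp add: coord_def)
  show "Fq_equivalent H (M ` H)" unfolding Fq_equivalent_def M_def
    apply (rule exI[of _ \<phi>], rule exI[of _ "inverse (coord h0 (\<phi> 1))"],
      rule exI[of _ "inverse (coord h0 (\<phi> 2))"], rule exI[of _ "inverse (coord h0 (\<phi> 3))"])
    using bij cz by simp
  show "M h0 = (1,1,1)" using cz by (simp add: M_def mono_map_def)
  show "fst (M u) = 0 \<longleftrightarrow> coord u (\<phi> 1) = 0"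
       "fst (snd (M u)) = 0 \<longleftrightarrow> coord u (\<phi> 2) = 0"
       "snd (snd (M u)) = 0 \<longleftrightarrow> coord u (\<phi> 3) = 0"
    using cz by (simp_all add: M_def mono_map_def)
  show "inj M"
  proof (rule injI)
    fix u w assume e: "M u = M w"
    have k: "coord u (\<phi> k) = coord w (\<phi> k)" if "k \<in> {1,2,3}" for k
    proof -
      from e have "coord u (\<phi> 1) = coord w (\<phi> 1)" "coord u (\<phi> 2) = coord w (\<phi> 2)"
         "coord u (\<phi> 3) = coord w (\<phi> 3)" using cz by (simp_all add: M_def mono_map_def)
      with that show ?thesis by auto
    qed
    have "coord u j = coord w j" if "j \<in> {1,2,3}" for j
    proof -
      from bij that obtain k where "k \<in> {1,2,3}" "j = \<phi> k"
        unfolding bij_betw_def by blast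
      with k show ?thesis by blast
    qed
    from this[of 1] this[of 2] this[of 3] show "u = w" by (simp add: prod_eq_iff coord_def)
  qed
qed

lemma H2_from:
  fixes H :: "('a::field) vec3 set"
  assumes bij: "bij_betw \<phi> {1,2,3::nat} {1,2,3}"
    and h0: "h0 \<in> H" "fst h0 \<noteq> 0" "fst (snd h0) \<noteq> 0" "snd (snd h0) \<noteq> 0"
    and uv: "u \<in> H" "v \<in> H" "u \<noteq> v" "coord u (\<phi> 1) = 0" "coord v (\<phi> 2) = 0" "coord v (\<phi> 3) = 0"
  shows "\<exists>S. Fq_equivalent H S \<and> (form_H1 S \<or> form_H2 S)"
proof -
  define M where "M = mono_map \<phi> (inverse (coord h0 (\<phi> 1))) (inverse (coord h0 (\<phi> 2))) (inverse (coord h0 (\<phi> 3)))"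
  note MM = Mmap[OF bij h0(2-4), folded M_def]
  have "form_H2 (M ` H)"
  proof -
    have A: "(1,1,1) \<in> M ` H" using MM(2) h0(1) by (metis image_eqI)
    have B: "M u \<in> M ` H" "M v \<in> M ` H" using uv by auto
    have C: "coord (M u) 1 = 0" "coord (M v) 2 = 0" "coord (M v) 3 = 0" using MM(4-6) uv by auto
    have "M u \<noteq> M v" using MM(3) uv(3) by (meson injD)
    moreover have "(1,1,1) \<noteq> M u" using MM(4) uv by (metis fst_conv one_neq_zero)
    moreover have "(1,1,1) \<noteq> M v" using MM(5) uv by (metis fst_conv snd_conv one_neq_zero)
    ultimately have D: "distinct [(1,1,1), M u, M v]" by simp
    show ?thesis unfolding form_H2_def using A B C D by blast
  qed
  with MM(1) show ?thesis by blast
qed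

lemma H1_from:
  fixes H :: "('a::field) vec3 set"
  assumes h0: "h0 \<in> H" "fst h0 \<noteq> 0" "fst (snd h0) \<noteq> 0" "snd (snd h0) \<noteq> 0"
    and uv: "u \<in> H" "v \<in> H" "w \<in> H" "distinct [u, v, w]" "fst u = 0" "fst (snd v) = 0" "snd (snd w) = 0"
  shows "\<exists>S. Fq_equivalent H S \<and> (form_H1 S \<or> form_H2 S)"
proof -
  have bij: "bij_betw (\<lambda>n. n) {1,2,3::nat} {1,2,3}" by (simp add: bij_betw_def)
  define M where "M = mono_map (\<lambda>n. n) (inverse (coord h0 1)) (inverse (coord h0 2)) (inverse (coord h0 3))"
  note MM = Mmap[OF bij h0(2-4), folded M_def]
  have "form_H1 (M ` H)"
  proof -
    have A: "(1,1,1) \<in> M ` H" using MM(2) h0(1) by (metis image_eqI)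
    have B: "M u \<in> M ` H" "M v \<in> M ` H" "M w \<in> M ` H" using uv by auto
    have C: "coord (M u) 1 = 0" "coord (M v) 2 = 0" "coord (M w) 3 = 0" using MM(4-6) uv by auto
    have "M u \<noteq> M v" "M u \<noteq> M w" "M v \<noteq> M w" using MM(3) uv(4) by (auto dest: injD)
    moreover have "(1,1,1) \<noteq> M u" using MM(4) uv by (metis fst_conv one_neq_zero coord_simps)
    moreover have "(1,1,1) \<noteq> M v" using MM(5) uv by (metis fst_conv snd_conv one_neq_zero coord_simps)
    moreover have "(1,1,1) \<noteq> M w" using MM(6) uv by (metis fst_conv snd_conv one_neq_zero coord_simps)
    ultimately have D: "distinct [(1,1,1), M u, M v, M w]" by simp
    show ?thesis unfolding form_H1_def using A B C D by blast
  qed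
  with MM(1) show ?thesis by blast
qed

theorem theorem18:
  fixes H :: "('a::{field,finite}) vec3 set"
  assumes "card (UNIV :: 'a set) \<ge> 7"
    and "card H = nat \<lceil>(real (card (UNIV :: 'a set)) + 1) / 2\<rceil>"
    and "short_covering H"
  shows "(\<exists>h\<in>H. weight h = 3)
    \<and> (\<forall>j\<in>{1,2,3::nat}. \<exists>h\<in>H. coord h j = 0)
    \<and> (\<exists>S. Fq_equivalent H S \<and> (form_H1 S \<or> form_H2 S))"
proof -
  define q where "q = card (UNIV :: 'a set)"
  have q7: "q \<ge> 7" using assms(1) by (simp add: q_def)
  have c0: "\<lceil>(real q + 1) / 2\<rceil> \<ge> 0" by simp
  have ci: "int (card H) = \<lceil>(real q + 1) / 2\<rceil>" using assms(2) c0 unfolding q_def by simp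
  have "of_int \<lceil>(real q + 1) / 2\<rceil> < (real q + 1) / 2 + 1" using ceiling_correct[of "(real q + 1) / 2"] by linarith
  hence "real (card H) < (real q + 1) / 2 + 1" using ci by (metis of_int_of_nat_eq)
  moreover have "real q \<ge> 7" using q7 by simp
  ultimately have "real (card H) + 1 < real q" by (simp add: field_simps)
  hence "card H + 1 < q" by (metis of_nat_1 of_nat_add of_nat_less_iff)
  hence cH: "card H < q - 1" by linarith
  from w3[OF assms(3)] cH obtain h0 where h0: "h0 \<in> H" "fst h0 \<noteq> 0" "fst (snd h0) \<noteq> 0" "snd (snd h0) \<noteq> 0"
    unfolding q_def by auto
  from class1[OF assms(3)] cH obtain u1 where u1: "u1 \<in> H" "fst u1 = 0" "u1 \<noteq> (0,0,0)"
    unfolding q_def by auto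
  from class2[OF assms(3)] cH obtain u2 where u2: "u2 \<in> H" "fst (snd u2) = 0" "u2 \<noteq> (0,0,0)"
    unfolding q_def by auto
  from class3[OF assms(3)] cH obtain u3 where u3: "u3 \<in> H" "snd (snd u3) = 0" "u3 \<noteq> (0,0,0)"
    unfolding q_def by auto
  have P1: "\<exists>h\<in>H. weight h = 3" using h0 weight3 by blast
  have P2: "\<forall>j\<in>{1,2,3::nat}. \<exists>h\<in>H. coord h j = 0" using u1 u2 u3 by auto
  have P3: "\<exists>S. Fq_equivalent H S \<and> (form_H1 S \<or> form_H2 S)"
  proof (cases "\<exists>v\<in>H. v \<noteq> (0,0,0) \<and> fst (snd v) = 0 \<and> snd (snd v) = 0")
    case True
    then obtain v where v: "v \<in> H" "v \<noteq> (0,0,0)" "fst (snd v) = 0" "snd (snd v) = 0" by blast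
    have bij: "bij_betw (\<lambda>n. n) {1,2,3::nat} {1,2,3}" by (simp add: bij_betw_def)
    have "u1 \<noteq> v" using u1 v by (auto simp: prod_eq_iff)
    from H2_from[OF bij h0 u1(1) v(1) this] u1 v show ?thesis by simp
  next
    case F1: False
    show ?thesis
    proof (cases "\<exists>v\<in>H. v \<noteq> (0,0,0) \<and> fst v = 0 \<and> snd (snd v) = 0")
      case True
      then obtain v where v: "v \<in> H" "v \<noteq> (0,0,0)" "fst v = 0" "snd (snd v) = 0" by blast
      have bij: "bij_betw (\<lambda>n. if n = 1 then 2 else if n = 2 then 1 else n) {1,2,3::nat} {1,2,3}"
        by (auto simp: bij_betw_def inj_on_def)
      have "u2 \<noteq> v" using u2 v by (auto simp: prod_eq_iff)
      from H2_from[OF bij h0 u2(1) v(1) this] u2 v show ?thesis by simp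
    next
      case F2: False
      show ?thesis
      proof (cases "\<exists>v\<in>H. v \<noteq> (0,0,0) \<and> fst v = 0 \<and> fst (snd v) = 0")
        case True
        then obtain v where v: "v \<in> H" "v \<noteq> (0,0,0)" "fst v = 0" "fst (snd v) = 0" by blast
        have bij: "bij_betw (\<lambda>n. if n = 1 then 3 else if n = 3 then 1 else n) {1,2,3::nat} {1,2,3}"
          by (auto simp: bij_betw_def inj_on_def)
        have "u3 \<noteq> v" using u3 v by (auto simp: prod_eq_iff)
        from H2_from[OF bij h0 u3(1) v(1) this] u3 v show ?thesis by simp
      next
        case F3: False
        have "distinct [u1, u2, u3]" using F1 F2 F3 u1 u2 u3 by auto
        from H1_from[OF h0 u1(1) u2(1) u3(1) this u1(2) u2(2) u3(2)] show ?thesis .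
      qed
    qed
  qed
  from P1 P2 P3 show ?thesis by blast
qed

end
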